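(* Let $Q=(I,\Omega)$ be a quiver, $\theta\in\mathbb{Z}^I$, $\alpha\in\mathbb{N}^I$, and $d^*=(d^1,\dots,d^s)$ a tuple of nonzero vectors in $\mathbb{N}^I$ with $d^1+\cdots+d^s=\alpha$. Let $F^*$ be a flag of type $d^*$ in $\bigoplus_{i\in I}\mathbb{C}^{\alpha_i}$, and let $\varphi:\mathrm{Rep}(Q,\alpha)_{F^*}\to\prod_{k=1}^s\mathrm{Rep}(Q,d^k)$ and $\mathrm{Rep}(Q,\alpha)^{ss}_{F^*}=\varphi^{-1}\bigl(\prod_{k=1}^s\mathrm{Rep}(Q,d^k)^{ss}\bigr)$ be as in the context. If $\mathrm{Rep}(Q,\alpha)^{ss}_{F^*}$ is nonempty, then $\dim \mathrm{Rep}(Q,\alpha)^{ss}_{F^*}=\dim\mathrm{Rep}(Q,\alpha)_{F^*}$.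
   Context: $\mathrm{Rep}(Q,\beta)$ is the vector space of complex representations of $Q$ with dimension vector $\beta$. A flag of type $d^*$ is a chain $0=F^0\subset F^1\subset\cdots\subset F^s=\bigoplus_i\mathbb{C}^{\alpha_i}$ of $I$-graded subspaces with $\dim_{I} F^k/F^{k-1}=d^k$. $\mathrm{Rep}(Q,\alpha)_{F^*}$ is the subspace of representations $x$ with $x_h(F^k_i)\subseteq F^k_j$ for every arrow $h:i\to j$ and every $k$. The map $\varphi$ sends $x$ to the tuple of representations induced on the subquotients $F^k/F^{k-1}$ (each identified with $\bigoplus_i\mathbb{C}^{d^k_i}$ by fixed choices of bases). The slope of a nonzero representation $V$ with dimension vector $\beta$ is $\mu(V)=\bigl(\sum_i\theta_i\beta_i\bigr)/\bigl(\sum_i\beta_i\bigr)$; $V$ is semistable if $\mu(U)\leq\mu(V)$ for every nonzero subrepresentation $U$ of $V$, and $\mathrm{Rep}(Q,\beta)^{ss}$ is the set of semistable representations. *)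

theory Defs
  imports Complex_Main "HOL-Library.Extended_Nat"
begin

text \<open>Quiver Q = (I, Omega): vertices of a finite type 'v, arrows of a finite type 'a,
  with source map src and target map tgt.  A representation x with dimension vector
  beta assigns to each arrow h a complex matrix x h of size beta(tgt h) x beta(src h),
  stored as the function (i,j) |-> x h i j, zero outside the bounds.\<close>

type_synonym 'a qrep = "'a \<Rightarrow> nat \<Rightarrow> nat \<Rightarrow> complex"

definition Rep :: "('a \<Rightarrow> 'v) \<Rightarrow> ('a \<Rightarrow> 'v) \<Rightarrow> ('v \<Rightarrow> nat) \<Rightarrow> 'a qrep set" where
  "Rep src tgt \<beta> = {x. \<forall>h i j. \<not> (i < \<beta> (tgt h) \<and> j < \<beta> (src h)) \<longrightarrow> x h i j = 0}"

text \<open>Vectors of C^n: functions nat => complex vanishing from index n on.\<close>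

definition cvec :: "nat \<Rightarrow> (nat \<Rightarrow> complex) set" where
  "cvec n = {v. \<forall>l\<ge>n. v l = 0}"

definition csubspace :: "nat \<Rightarrow> (nat \<Rightarrow> complex) set \<Rightarrow> bool" where
  "csubspace n U \<longleftrightarrow> U \<subseteq> cvec n \<and> (\<lambda>_. 0) \<in> U \<and>
     (\<forall>u\<in>U. \<forall>v\<in>U. (\<lambda>l. u l + v l) \<in> U) \<and> (\<forall>c. \<forall>u\<in>U. (\<lambda>l. c * u l) \<in> U)"

definition clin_indep :: "(nat \<Rightarrow> complex) set \<Rightarrow> bool" where
  "clin_indep A \<longleftrightarrow> (\<forall>c. (\<lambda>l. \<Sum>v\<in>A. c v * v l) = (\<lambda>_. 0) \<longrightarrow> (\<forall>v\<in>A. c v = 0))"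

definition cdim :: "(nat \<Rightarrow> complex) set \<Rightarrow> nat" where
  "cdim U = Max {card A | A. finite A \<and> A \<subseteq> U \<and> clin_indep A}"

definition matvec :: "nat \<Rightarrow> nat \<Rightarrow> (nat \<Rightarrow> nat \<Rightarrow> complex) \<Rightarrow> (nat \<Rightarrow> complex) \<Rightarrow> (nat \<Rightarrow> complex)" where
  "matvec m n M v = (\<lambda>i. if i < m then (\<Sum>j<n. M i j * v j) else 0)"

definition slope :: "('v::finite \<Rightarrow> int) \<Rightarrow> ('v \<Rightarrow> nat) \<Rightarrow> real" where
  "slope \<theta> \<beta> = (\<Sum>i\<in>UNIV. real_of_int (\<theta> i) * real (\<beta> i)) / (\<Sum>i\<in>UNIV. real (\<beta> i))"

definition semistable :: "('a \<Rightarrow> 'v) \<Rightarrow> ('a \<Rightarrow> 'v) \<Rightarrow> ('v::finite \<Rightarrow> int) \<Rightarrow> ('v \<Rightarrow> nat) \<Rightarrow> 'a qrep \<Rightarrow> bool" where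
  "semistable src tgt \<theta> \<beta> y \<longleftrightarrow> y \<in> Rep src tgt \<beta> \<and>
     (\<forall>U :: 'v \<Rightarrow> (nat \<Rightarrow> complex) set.
        (\<forall>i. csubspace (\<beta> i) (U i)) \<and>
        (\<forall>h. \<forall>v\<in>U (src h). matvec (\<beta> (tgt h)) (\<beta> (src h)) (y h) v \<in> U (tgt h)) \<and>
        (\<exists>i. U i \<noteq> {\<lambda>_. 0})
        \<longrightarrow> slope \<theta> (\<lambda>i. cdim (U i)) \<le> slope \<theta> \<beta>)"

text \<open>A flag F^* of type d^* = (d 1, ..., d s) together with fixed bases of the
  subquotients is encoded by an adapted basis: for each vertex i an invertible
  alpha_i x alpha_i matrix g i (inverse ginv i) whose columns D_{k-1}(i), ..., D_k(i) - 1
  lift the chosen basis of F^k_i / F^{k-1}_i, where D_k(i) = d^1_i + ... + d^k_i.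
  Thus F^k_i is the span of the first D_k(i) columns of g i.\<close>

definition psum :: "(nat \<Rightarrow> 'v \<Rightarrow> nat) \<Rightarrow> nat \<Rightarrow> 'v \<Rightarrow> nat" where
  "psum d k i = (\<Sum>m\<in>{1..k}. d m i)"

definition flagsp :: "('v \<Rightarrow> nat) \<Rightarrow> (nat \<Rightarrow> 'v \<Rightarrow> nat) \<Rightarrow> ('v \<Rightarrow> nat \<Rightarrow> nat \<Rightarrow> complex)
     \<Rightarrow> nat \<Rightarrow> 'v \<Rightarrow> (nat \<Rightarrow> complex) set" where
  "flagsp \<alpha> d g k i = {v. \<exists>c. v = (\<lambda>p. if p < \<alpha> i then (\<Sum>l<psum d k i. c l * g i p l) else 0)}"

definition is_adapted_basis :: "('v \<Rightarrow> nat) \<Rightarrow> ('v \<Rightarrow> nat \<Rightarrow> nat \<Rightarrow> complex)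
     \<Rightarrow> ('v \<Rightarrow> nat \<Rightarrow> nat \<Rightarrow> complex) \<Rightarrow> bool" where
  "is_adapted_basis \<alpha> g ginv \<longleftrightarrow>
     (\<forall>i p q. p < \<alpha> i \<and> q < \<alpha> i \<longrightarrow>
        (\<Sum>l<\<alpha> i. g i p l * ginv i l q) = (if p = q then 1 else 0) \<and>
        (\<Sum>l<\<alpha> i. ginv i p l * g i l q) = (if p = q then 1 else 0))"

definition RepF :: "('a \<Rightarrow> 'v) \<Rightarrow> ('a \<Rightarrow> 'v) \<Rightarrow> ('v \<Rightarrow> nat) \<Rightarrow> nat \<Rightarrow> (nat \<Rightarrow> 'v \<Rightarrow> nat)
     \<Rightarrow> ('v \<Rightarrow> nat \<Rightarrow> nat \<Rightarrow> complex) \<Rightarrow> 'a qrep set" where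
  "RepF src tgt \<alpha> s d g = {x \<in> Rep src tgt \<alpha>. \<forall>k\<in>{1..s}. \<forall>h. \<forall>v\<in>flagsp \<alpha> d g k (src h).
       matvec (\<alpha> (tgt h)) (\<alpha> (src h)) (x h) v \<in> flagsp \<alpha> d g k (tgt h)}"

text \<open>The k-th component of phi: the matrix of the map induced by x h on
  F^k/F^{k-1}, in the chosen bases (i.e. the k-th diagonal block of ginv * x h * g).\<close>

definition phi :: "('a \<Rightarrow> 'v) \<Rightarrow> ('a \<Rightarrow> 'v) \<Rightarrow> ('v \<Rightarrow> nat) \<Rightarrow> (nat \<Rightarrow> 'v \<Rightarrow> nat)
     \<Rightarrow> ('v \<Rightarrow> nat \<Rightarrow> nat \<Rightarrow> complex) \<Rightarrow> ('v \<Rightarrow> nat \<Rightarrow> nat \<Rightarrow> complex) \<Rightarrow> nat \<Rightarrow> 'a qrep \<Rightarrow> 'a qrep" where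
  "phi src tgt \<alpha> d g ginv k x = (\<lambda>h p q.
     if p < d k (tgt h) \<and> q < d k (src h) then
       (\<Sum>a<\<alpha> (tgt h). \<Sum>b<\<alpha> (src h).
          ginv (tgt h) (psum d (k - 1) (tgt h) + p) a * x h a b * g (src h) b (psum d (k - 1) (src h) + q))
     else 0)"

definition RepFss :: "('a \<Rightarrow> 'v) \<Rightarrow> ('a \<Rightarrow> 'v) \<Rightarrow> ('v::finite \<Rightarrow> int) \<Rightarrow> ('v \<Rightarrow> nat) \<Rightarrow> nat
     \<Rightarrow> (nat \<Rightarrow> 'v \<Rightarrow> nat) \<Rightarrow> ('v \<Rightarrow> nat \<Rightarrow> nat \<Rightarrow> complex) \<Rightarrow> ('v \<Rightarrow> nat \<Rightarrow> nat \<Rightarrow> complex) \<Rightarrow> 'a qrep set" where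
  "RepFss src tgt \<theta> \<alpha> s d g ginv = {x \<in> RepF src tgt \<alpha> s d g.
       \<forall>k\<in>{1..s}. semistable src tgt \<theta> (d k) (phi src tgt \<alpha> d g ginv k x)}"

text \<open>Zariski topology on the space of representations (coordinates x h i j) and
  the dimension of a subset as the Krull dimension of its Zariski closure.\<close>

inductive polyfun :: "('a qrep \<Rightarrow> complex) \<Rightarrow> bool" where
  pconst: "polyfun (\<lambda>_. c)"
| pcoord: "polyfun (\<lambda>x. x h i j)"
| padd: "polyfun f \<Longrightarrow> polyfun g \<Longrightarrow> polyfun (\<lambda>x. f x + g x)"
| pmult: "polyfun f \<Longrightarrow> polyfun g \<Longrightarrow> polyfun (\<lambda>x. f x * g x)"

definition zclosed :: "'a qrep set \<Rightarrow> bool" where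
  "zclosed Z \<longleftrightarrow> (\<exists>P. (\<forall>p\<in>P. polyfun p) \<and> Z = {x. \<forall>p\<in>P. p x = 0})"

definition zclosure :: "'a qrep set \<Rightarrow> 'a qrep set" where
  "zclosure S = \<Inter>{Z. zclosed Z \<and> S \<subseteq> Z}"

definition zirreducible :: "'a qrep set \<Rightarrow> bool" where
  "zirreducible Z \<longleftrightarrow> zclosed Z \<and> Z \<noteq> {} \<and>
     (\<forall>A B. zclosed A \<and> zclosed B \<and> Z \<subseteq> A \<union> B \<longrightarrow> Z \<subseteq> A \<or> Z \<subseteq> B)"

definition zdim :: "'a qrep set \<Rightarrow> enat" where
  "zdim S = Sup {enat n | n. \<exists>C :: nat \<Rightarrow> 'a qrep set.
      (\<forall>j\<le>n. zirreducible (C j)) \<and> (\<forall>j<n. C j \<subset> C (Suc j)) \<and> C n \<subseteq> zclosure S}"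

end

theory Submission
  imports Defs "HOL-Library.Function_Algebras" "HOL-Computational_Algebra.Polynomial"
    "HOL-Library.Infinite_Set" "HOL-Library.FuncSet"
begin

definition sc :: "complex \<Rightarrow> (nat \<Rightarrow> complex) \<Rightarrow> (nat \<Rightarrow> complex)" where
  "sc c f = (\<lambda>l. c * f l)"

lemma sum_fun_app: "(sum f A) l = (\<Sum>a\<in>A. f a l)" for f :: "'b \<Rightarrow> nat \<Rightarrow> complex"
  by (induction A rule: infinite_finite_induct) auto

interpretation V: vector_space sc
  by unfold_locales (auto simp: sc_def fun_eq_iff algebra_simps)

lemma sc_sum: "sum (\<lambda>v. sc (c v) (f v)) A = (\<lambda>l. \<Sum>v\<in>A. c v * f v l)"
  by (auto simp: fun_eq_iff sum_fun_app sc_def)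

lemma indep_iff: "finite A \<Longrightarrow> clin_indep A \<longleftrightarrow> V.independent A"
proof
  assume f: "finite A" and c: "clin_indep A"
  show "V.independent A"
  proof (rule V.independent_if_scalars_zero[OF f])
    fix g x assume "(\<Sum>x\<in>A. sc (g x) x) = 0" "x \<in> A"
    then show "g x = 0" using c unfolding clin_indep_def sc_sum by (auto simp: zero_fun_def)
  qed
next
  assume f: "finite A" and i: "V.independent A"
  show "clin_indep A" unfolding clin_indep_def
  proof (intro allI impI ballI)
    fix c v assume "(\<lambda>l. \<Sum>v\<in>A. c v * v l) = (\<lambda>_. 0)" "v \<in> A"
    then show "c v = 0" using V.independentD[OF i f order_refl, of c v]
      by (simp add: sc_sum zero_fun_def)
  qed
qed

definition cinner :: "nat \<Rightarrow> (nat \<Rightarrow> complex) \<Rightarrow> (nat \<Rightarrow> complex) \<Rightarrow> complex" where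
  "cinner N u v = (\<Sum>l<N. u l * cnj (v l))"

definition ortho :: "nat \<Rightarrow> (nat \<Rightarrow> nat \<Rightarrow> complex) \<Rightarrow> nat \<Rightarrow> bool" where
  "ortho N u m \<longleftrightarrow> (\<forall>r<m. \<forall>s<m. cinner N (u r) (u s) = (if r = s then 1 else 0))"

definition cspan :: "(nat \<Rightarrow> nat \<Rightarrow> complex) \<Rightarrow> nat \<Rightarrow> (nat \<Rightarrow> complex) set" where
  "cspan u m = range (\<lambda>c. \<lambda>l. \<Sum>r<m. c r * u r l)"

lemma cspan_sub_span: "cspan u m \<subseteq> V.span (u ` {..<m})"
proof
  fix v assume "v \<in> cspan u m"
  then obtain c where v: "v = (\<lambda>l. \<Sum>r<m. c r * u r l)" by (auto simp: cspan_def)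
  have "v = (\<Sum>r<m. sc (c r) (u r))" by (simp add: v sc_sum)
  also have "\<dots> \<in> V.span (u ` {..<m})"
    by (intro V.span_sum V.span_scale V.span_base) auto
  finally show "v \<in> V.span (u ` {..<m})" .
qed

definition ev :: "nat \<Rightarrow> nat \<Rightarrow> complex" where "ev r = (\<lambda>l. if l = r then 1 else 0)"

lemma cvec_cspan: "cvec N \<subseteq> cspan ev N"
proof
  fix v assume v: "v \<in> cvec N"
  have "v = (\<lambda>l. \<Sum>r<N. v r * ev r l)"
  proof
    fix l show "v l = (\<Sum>r<N. v r * ev r l)"
      using v by (cases "l < N") (auto simp: ev_def cvec_def if_distrib cong: if_cong)
  qed
  then show "v \<in> cspan ev N" unfolding cspan_def by blast
qed

lemma bound_cspan:
  assumes "finite A" "clin_indep A" "A \<subseteq> cspan u m" shows "card A \<le> m"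
proof -
  have "card A \<le> card (u ` {..<m})"
    using V.independent_span_bound[of "u ` {..<m}" A] assms cspan_sub_span[of u m] indep_iff
    by blast
  also have "\<dots> \<le> m" using card_image_le[of "{..<m}" u] by simp
  finally show ?thesis .
qed

lemma bound_cvec:
  assumes "finite A" "clin_indep A" "A \<subseteq> cvec N" shows "card A \<le> N"
  using bound_cspan[OF assms(1,2)] assms(3) cvec_cspan by blast

lemma cdim_props:
  assumes "U \<subseteq> cvec N"
  shows "\<exists>A. finite A \<and> A \<subseteq> U \<and> clin_indep A \<and> card A = cdim U"
    and "finite A \<Longrightarrow> A \<subseteq> U \<Longrightarrow> clin_indep A \<Longrightarrow> card A \<le> cdim U"
    and "cdim U \<le> N"
proof -
  let ?S = "{card A | A. finite A \<and> A \<subseteq> U \<and> clin_indep A}"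
  have sub: "?S \<subseteq> {..N}" using bound_cvec assms by fastforce
  hence fin: "finite ?S" using finite_subset by blast
  have "0 \<in> ?S" by (rule CollectI, rule exI[of _ "{}"]) (auto simp: clin_indep_def)
  hence ne: "?S \<noteq> {}" by blast
  show "\<exists>A. finite A \<and> A \<subseteq> U \<and> clin_indep A \<and> card A = cdim U"
    using Max_in[OF fin ne] unfolding cdim_def by auto
  show "finite A \<Longrightarrow> A \<subseteq> U \<Longrightarrow> clin_indep A \<Longrightarrow> card A \<le> cdim U"
    unfolding cdim_def by (rule Max_ge[OF fin]) blast
  show "cdim U \<le> N" using Max_in[OF fin ne] sub unfolding cdim_def by auto
qed


lemma cinner_lin: "finite R \<Longrightarrow> cinner N (\<lambda>l. \<Sum>r\<in>R. c r * u r l) v = (\<Sum>r\<in>R. c r * cinner N (u r) v)"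
  unfolding cinner_def by (simp add: sum_distrib_left sum_distrib_right mult.assoc, rule sum.swap)

lemma cinner_diff: "cinner N (\<lambda>l. f l - g l) v = cinner N f v - cinner N g v"
  unfolding cinner_def by (simp add: sum_subtractf left_diff_distrib)

lemma cinner_scale_left: "cinner N (\<lambda>l. c * f l) v = c * cinner N f v"
  unfolding cinner_def by (simp add: sum_distrib_left mult.assoc)

lemma cinner_scale_right: "cinner N f (\<lambda>l. c * v l) = cnj c * cinner N f v"
  unfolding cinner_def by (simp add: sum_distrib_left mult.assoc mult.left_commute)

lemma cinner_sym: "cinner N u v = cnj (cinner N v u)"
  unfolding cinner_def by (simp add: mult.commute)

lemma cinner_self: "cinner N w w = complex_of_real (\<Sum>l<N. (cmod (w l))^2)"
  unfolding cinner_def by (simp add: complex_norm_square[symmetric])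

lemma in_cspan: "r < m \<Longrightarrow> u r \<in> cspan u m"
  unfolding cspan_def
  by (rule range_eqI[of _ _ "\<lambda>r'. if r' = r then 1 else 0"]) (auto simp: fun_eq_iff if_distrib[of "\<lambda>x. x * y" for y] sum.delta cong: if_cong)

lemma cspan_cvec: "(\<forall>r<m. u r \<in> cvec N) \<Longrightarrow> cspan u m \<subseteq> cvec N"
  unfolding cspan_def cvec_def by auto

lemma expand:
  assumes o: "ortho N u m" and v: "v \<in> cspan u m"
  shows "v = (\<lambda>l. \<Sum>s<m. cinner N v (u s) * u s l)"
proof -
  obtain c where c: "v = (\<lambda>l. \<Sum>r<m. c r * u r l)" using v by (auto simp: cspan_def)
  have "cinner N v (u s) = c s" if "s < m" for s
  proof -
    have "cinner N v (u s) = (\<Sum>r<m. c r * cinner N (u r) (u s))" unfolding c by (rule cinner_lin) simp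
    also have "\<dots> = (\<Sum>r<m. c r * (if r = s then 1 else 0))"
      using o that unfolding ortho_def by (intro sum.cong) auto
    also have "\<dots> = c s" using that by (simp add: if_distrib cong: if_cong)
    finally show ?thesis .
  qed
  then show ?thesis by (simp add: c)
qed

lemma cspan_subspace: "V.subspace (cspan u m)"
  unfolding V.subspace_def cspan_def
proof (intro conjI ballI allI)
  show "0 \<in> range (\<lambda>c l. \<Sum>r<m. c r * u r l)"
    by (rule range_eqI[of _ _ "\<lambda>_. 0"]) (simp add: zero_fun_def)
next
  fix x y assume "x \<in> range (\<lambda>c l. \<Sum>r<m. c r * u r l)" "y \<in> range (\<lambda>c l. \<Sum>r<m. c r * u r l)"
  then obtain c1 c2 where "x = (\<lambda>l. \<Sum>r<m. c1 r * u r l)" "y = (\<lambda>l. \<Sum>r<m. c2 r * u r l)" by auto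
  then show "x + y \<in> range (\<lambda>c l. \<Sum>r<m. c r * u r l)"
    by (intro range_eqI[of _ _ "\<lambda>r. c1 r + c2 r"]) (auto simp: fun_eq_iff sum.distrib distrib_right)
next
  fix c x assume "x \<in> range (\<lambda>c l. \<Sum>r<m. c r * u r l)"
  then obtain c1 where "x = (\<lambda>l. \<Sum>r<m. c1 r * u r l)" by auto
  then show "sc c x \<in> range (\<lambda>c l. \<Sum>r<m. c r * u r l)"
    by (intro range_eqI[of _ _ "\<lambda>r. c * c1 r"]) (auto simp: fun_eq_iff sc_def sum_distrib_left mult.assoc)
qed

lemma cspan_sub_span2: "(\<forall>r<m. u r \<in> V.span S) \<Longrightarrow> cspan u m \<subseteq> V.span S"
  using cspan_sub_span[of u m] V.span_minimal[of "u ` {..<m}" "V.span S"] V.subspace_span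
  by blast

lemma cdim_cspan:
  assumes o: "ortho N u m" and uc: "\<forall>r<m. u r \<in> cvec N"
  shows "cdim (cspan u m) = m"
proof -
  have sub: "cspan u m \<subseteq> cvec N" using cspan_cvec[OF uc] .
  obtain A where A: "finite A" "A \<subseteq> cspan u m" "clin_indep A" "card A = cdim (cspan u m)"
    using cdim_props(1)[OF sub] by blast
  have le: "cdim (cspan u m) \<le> m" using bound_cspan[OF A(1,3,2)] A(4) by simp
  have inj: "inj_on u {..<m}"
  proof (rule inj_onI)
    fix r s assume "r \<in> {..<m}" "s \<in> {..<m}" "u r = u s"
    then show "r = s" using o unfolding ortho_def by (metis lessThan_iff one_neq_zero)
  qed
  have ind: "clin_indep (u ` {..<m})" unfolding clin_indep_def
  proof (intro allI impI ballI)
    fix c v assume h: "(\<lambda>l. \<Sum>v\<in>u ` {..<m}. c v * v l) = (\<lambda>_. 0)" and v: "v \<in> u ` {..<m}"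
    then obtain s where s: "s < m" "v = u s" by auto
    have h2: "(\<lambda>l. \<Sum>r<m. c (u r) * u r l) = (\<lambda>_. 0)"
      using h by (simp add: sum.reindex[OF inj])
    have "0 = cinner N (\<lambda>l. \<Sum>r<m. c (u r) * u r l) (u s)" by (simp add: h2 cinner_def)
    also have "\<dots> = (\<Sum>r<m. c (u r) * cinner N (u r) (u s))" by (rule cinner_lin) simp
    also have "\<dots> = (\<Sum>r<m. c (u r) * (if r = s then 1 else 0))"
      using o s unfolding ortho_def by (intro sum.cong) auto
    also have "\<dots> = c v" using s by (simp add: if_distrib cong: if_cong)
    finally show "c v = 0" by simp
  qed
  have "card (u ` {..<m}) \<le> cdim (cspan u m)"
    by (rule cdim_props(2)[OF sub]) (use ind in_cspan in auto)
  then show ?thesis using le card_image[OF inj] by simp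
qed


lemma GS:
  assumes "finite A" "A \<subseteq> cvec N" "V.independent A"
  shows "\<exists>u. ortho N u (card A) \<and> (\<forall>r<card A. u r \<in> cvec N \<and> u r \<in> V.span A) \<and> A \<subseteq> cspan u (card A)"
  using assms
proof (induction A rule: finite_induct)
  case empty
  then show ?case by (auto simp: ortho_def)
next
  case (insert a F)
  have indF: "V.independent F" and aF: "a \<notin> V.span F"
    using insert.prems(2) insert.hyps(2) by (auto simp: V.independent_insert)
  have acv: "a \<in> cvec N" using insert.prems by auto
  obtain u where o: "ortho N u (card F)" and uc: "\<forall>r<card F. u r \<in> cvec N \<and> u r \<in> V.span F"
    and Fs: "F \<subseteq> cspan u (card F)"
    using insert.IH insert.prems indF by auto
  define m where "m = card F"
  define p where "p = (\<lambda>l. \<Sum>r<m. cinner N a (u r) * u r l)"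
  define w where "w = (\<lambda>l. a l - p l)"
  have pspan: "p \<in> cspan u m" unfolding p_def cspan_def by (rule range_eqI[of _ _ "\<lambda>r. cinner N a (u r)"]) simp
  have pF: "p \<in> V.span F" using cspan_sub_span2[of m u F] uc pspan m_def by blast
  have wcv: "w \<in> cvec N" using acv uc unfolding w_def p_def cvec_def m_def by auto
  have wne: "w \<noteq> (\<lambda>_. 0)"
  proof
    assume "w = (\<lambda>_. 0)"
    then have "a = p" unfolding w_def by (auto simp: fun_eq_iff)
    then show False using aF pF by simp
  qed
  then obtain l0 where l0: "w l0 \<noteq> 0" by auto
  have l0N: "l0 < N"
  proof (rule ccontr)
    assume "\<not> l0 < N"
    then have "w l0 = 0" using wcv by (simp add: cvec_def)
    with l0 show False by simp
  qed
  define S where "S = (\<Sum>l<N. (cmod (w l))^2)"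
  have "(cmod (w l0))^2 \<le> S" unfolding S_def
    by (rule member_le_sum) (use l0N in auto)
  moreover have "(cmod (w l0))^2 > 0" using l0 by simp
  ultimately have Spos: "S > 0" by linarith
  define \<rho> where "\<rho> = sqrt S"
  have rpos: "\<rho> > 0" using Spos unfolding \<rho>_def by simp
  have rr: "\<rho> * \<rho> = S" unfolding \<rho>_def using Spos by simp
  define k where "k = complex_of_real (1/\<rho>)"
  have kc: "cnj k = k" unfolding k_def by simp
  have kk: "k * k * complex_of_real S = 1"
  proof -
    have "k * k * complex_of_real S = complex_of_real ((1/\<rho>) * (1/\<rho>) * S)" unfolding k_def by simp
    also have "(1/\<rho>) * (1/\<rho>) * S = 1" using rr rpos Spos by (simp add: field_simps)
    finally show ?thesis by simp
  qed
  have kr: "complex_of_real \<rho> * k = 1"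
  proof -
    have "complex_of_real \<rho> * k = complex_of_real (\<rho> * (1/\<rho>))" unfolding k_def by simp
    also have "\<rho> * (1/\<rho>) = 1" using rpos by simp
    finally show ?thesis by simp
  qed
  define u' where "u' = u(m := (\<lambda>l. k * w l))"
  have wo: "cinner N w (u s) = 0" if "s < m" for s
  proof -
    have "cinner N p (u s) = (\<Sum>r<m. cinner N a (u r) * cinner N (u r) (u s))"
      unfolding p_def by (rule cinner_lin) simp
    also have "\<dots> = (\<Sum>r<m. cinner N a (u r) * (if r = s then 1 else 0))"
      using o that unfolding ortho_def m_def by (intro sum.cong) auto
    also have "\<dots> = cinner N a (u s)" using that by (simp add: if_distrib cong: if_cong)
    finally show ?thesis unfolding w_def cinner_diff by simp
  qed
  have ww: "cinner N w w = complex_of_real S" unfolding S_def by (rule cinner_self)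
  have o': "ortho N u' (card (insert a F))"
    unfolding ortho_def
  proof (intro allI impI)
    fix r s assume r: "r < card (insert a F)" and s: "s < card (insert a F)"
    then have r': "r < Suc m" and s': "s < Suc m" using insert.hyps m_def by auto
    show "cinner N (u' r) (u' s) = (if r = s then 1 else 0)"
    proof (cases "r = m")
      case True
      note rt = True
      show ?thesis
      proof (cases "s = m")
        case True
        have "cinner N (u' r) (u' s) = k * (cnj k * cinner N w w)"
          using rt True unfolding u'_def by (simp add: cinner_scale_left cinner_scale_right)
        also have "\<dots> = 1" using kk kc ww by (simp add: mult.assoc)
        finally show ?thesis using rt True by simp
      next
        case False
        then have "s < m" using s' by simp
        then show ?thesis using rt False wo unfolding u'_def by (simp add: cinner_scale_left)
      qed
    next
      case False
      then have rm: "r < m" using r' by simp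
      show ?thesis
      proof (cases "s = m")
        case True
        have "cinner N (u r) w = 0" using wo[OF rm] cinner_sym[of N "u r" w] by simp
        then show ?thesis using rm True unfolding u'_def by (simp add: cinner_scale_right)
      next
        case False
        then show ?thesis using rm s' o unfolding u'_def ortho_def m_def by simp
      qed
    qed
  qed
  have spanI: "V.span F \<subseteq> V.span (insert a F)" by (rule V.span_mono) auto
  have wsp: "w \<in> V.span (insert a F)"
  proof -
    have "w = a - p" unfolding w_def by (simp add: fun_eq_iff)
    moreover have "a \<in> V.span (insert a F)" by (rule V.span_base) simp
    ultimately show ?thesis using pF spanI V.span_diff by auto
  qed
  have uc': "\<forall>r<card (insert a F). u' r \<in> cvec N \<and> u' r \<in> V.span (insert a F)"
  proof (intro allI impI)
    fix r assume "r < card (insert a F)"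
    then have r': "r < Suc m" using insert.hyps m_def by auto
    show "u' r \<in> cvec N \<and> u' r \<in> V.span (insert a F)"
    proof (cases "r = m")
      case True
      have "u' r = sc k w" using True unfolding u'_def sc_def by simp
      then show ?thesis using wsp V.span_scale wcv by (auto simp: cvec_def sc_def)
    next
      case False
      then show ?thesis using uc r' spanI unfolding u'_def m_def by auto
    qed
  qed
  have cs: "cspan u m \<subseteq> cspan u' (Suc m)"
  proof
    fix v assume "v \<in> cspan u m"
    then obtain c where c: "v = (\<lambda>l. \<Sum>r<m. c r * u r l)" by (auto simp: cspan_def)
    have "v = (\<lambda>l. \<Sum>r<Suc m. (c(m := 0)) r * u' r l)"
      unfolding c u'_def by (auto simp: fun_eq_iff intro!: sum.cong)
    then show "v \<in> cspan u' (Suc m)" unfolding cspan_def by blast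
  qed
  have acs: "a \<in> cspan u' (Suc m)"
  proof -
    have "a = (\<lambda>l. \<Sum>r<Suc m. ((\<lambda>r. cinner N a (u r))(m := complex_of_real \<rho>)) r * u' r l)"
    proof
      fix l
      have "(\<Sum>r<Suc m. ((\<lambda>r. cinner N a (u r))(m := complex_of_real \<rho>)) r * u' r l)
          = (\<Sum>r<m. cinner N a (u r) * u r l) + complex_of_real \<rho> * (k * w l)"
        unfolding u'_def by (auto intro!: sum.cong)
      also have "\<dots> = p l + w l" unfolding p_def by (simp add: mult.assoc[symmetric] kr)
      also have "\<dots> = a l" unfolding w_def by simp
      finally show "a l = (\<Sum>r<Suc m. ((\<lambda>r. cinner N a (u r))(m := complex_of_real \<rho>)) r * u' r l)" by simp
    qed
    then show ?thesis unfolding cspan_def by blast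
  qed
  have "insert a F \<subseteq> cspan u' (card (insert a F))"
    using insert.hyps Fs cs acs m_def by auto
  then show ?case using o' uc' by blast
qed

lemma csub_subspace: "csubspace N U \<Longrightarrow> V.subspace U"
  unfolding csubspace_def V.subspace_def by (auto simp: zero_fun_def plus_fun_def sc_def)

lemma ONB:
  assumes cs: "csubspace N U"
  shows "\<exists>u. ortho N u (cdim U) \<and> (\<forall>r<cdim U. u r \<in> cvec N) \<and> U = cspan u (cdim U)"
proof -
  have sub: "U \<subseteq> cvec N" using cs unfolding csubspace_def by auto
  obtain A where A: "finite A" "A \<subseteq> U" "clin_indep A" "card A = cdim U"
    using cdim_props(1)[OF sub] by blast
  have iA: "V.independent A" using A indep_iff by blast
  obtain u where o: "ortho N u (card A)" and uc: "\<forall>r<card A. u r \<in> cvec N \<and> u r \<in> V.span A"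
    and As: "A \<subseteq> cspan u (card A)"
    using GS[OF A(1) _ iA] A(2) sub by blast
  have spA: "V.span A \<subseteq> U" by (rule V.span_minimal[OF A(2) csub_subspace[OF cs]])
  have "cspan u (card A) \<subseteq> U" using cspan_sub_span2[of "card A" u A] uc spA by blast
  moreover have "U \<subseteq> cspan u (card A)"
  proof
    fix v assume v: "v \<in> U"
    have "v \<in> V.span A"
    proof (rule ccontr)
      assume nv: "v \<notin> V.span A"
      then have "v \<notin> A" using V.span_base by blast
      have "V.independent (insert v A)" using V.independent_insertI[OF nv iA] .
      then have "clin_indep (insert v A)" using indep_iff A(1) by blast
      then have "card (insert v A) \<le> cdim U"
        by (intro cdim_props(2)[OF sub]) (use A v in auto)
      then show False using A \<open>v \<notin> A\<close> by simp
    qed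
    then show "v \<in> cspan u (card A)"
      using V.span_minimal[OF As cspan_subspace] by blast
  qed
  ultimately show ?thesis using o uc A(4) by auto
qed


lemma BW_real:
  fixes x :: "nat \<Rightarrow> real"
  assumes "\<And>n. \<bar>x n\<bar> \<le> B"
  shows "\<exists>\<sigma> l. strict_mono \<sigma> \<and> (x \<circ> \<sigma>) \<longlonglongrightarrow> l"
proof -
  obtain f where f: "strict_mono f" "monoseq (\<lambda>n. x (f n))" using seq_monosub by blast
  have "Bseq (\<lambda>n. x (f n))" by (rule BseqI'[of _ B]) (use assms in simp)
  then have "convergent (\<lambda>n. x (f n))" using f(2) Bseq_monoseq_convergent by blast
  then obtain l where "(\<lambda>n. x (f n)) \<longlonglongrightarrow> l" by (auto simp: convergent_def)
  then show ?thesis using f(1) by (auto simp: comp_def)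
qed

lemma BW_complex:
  fixes x :: "nat \<Rightarrow> complex"
  assumes b: "\<And>n. cmod (x n) \<le> B"
  shows "\<exists>\<sigma> l. strict_mono \<sigma> \<and> (x \<circ> \<sigma>) \<longlonglongrightarrow> l"
proof -
  obtain f lr where f: "strict_mono f" "((\<lambda>n. Re (x n)) \<circ> f) \<longlonglongrightarrow> lr"
    using BW_real[of "\<lambda>n. Re (x n)" B] b abs_Re_le_cmod order_trans by blast
  obtain g li where g: "strict_mono g" "((\<lambda>n. Im (x (f n))) \<circ> g) \<longlonglongrightarrow> li"
    using BW_real[of "\<lambda>n. Im (x (f n))" B] b abs_Im_le_cmod order_trans by blast
  have r: "(\<lambda>n. Re (x (f (g n)))) \<longlonglongrightarrow> lr"
    using LIMSEQ_subseq_LIMSEQ[OF f(2) g(1)] by (simp add: comp_def)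
  have i: "(\<lambda>n. Im (x (f (g n)))) \<longlonglongrightarrow> li" using g(2) by (simp add: comp_def)
  have "(\<lambda>n. Complex (Re (x (f (g n)))) (Im (x (f (g n))))) \<longlonglongrightarrow> Complex lr li"
    by (rule tendsto_Complex[OF r i])
  then have "(x \<circ> (f \<circ> g)) \<longlonglongrightarrow> Complex lr li" by (simp add: comp_def)
  then show ?thesis using strict_mono_o[OF f(1) g(1)] by blast
qed

lemma SUB:
  fixes f :: "nat \<Rightarrow> 'k \<Rightarrow> complex"
  assumes "finite K" "\<And>n k. k \<in> K \<Longrightarrow> cmod (f n k) \<le> B"
  shows "\<exists>\<sigma> L. strict_mono \<sigma> \<and> (\<forall>k\<in>K. (\<lambda>n. f (\<sigma> n) k) \<longlonglongrightarrow> L k)"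
  using assms
proof (induction K rule: finite_induct)
  case empty
  show ?case by (rule exI[of _ id]) (auto simp: strict_mono_def)
next
  case (insert k K)
  obtain \<sigma> L where s: "strict_mono \<sigma>" "\<forall>k\<in>K. (\<lambda>n. f (\<sigma> n) k) \<longlonglongrightarrow> L k"
    using insert by blast
  obtain g l where g: "strict_mono g" "((\<lambda>n. f (\<sigma> n) k) \<circ> g) \<longlonglongrightarrow> l"
    using BW_complex[of "\<lambda>n. f (\<sigma> n) k" B] insert.prems by blast
  have "\<forall>k'\<in>insert k K. (\<lambda>n. f ((\<sigma> \<circ> g) n) k') \<longlonglongrightarrow> (L(k := l)) k'"
  proof
    fix k' assume "k' \<in> insert k K"
    then show "(\<lambda>n. f ((\<sigma> \<circ> g) n) k') \<longlonglongrightarrow> (L(k := l)) k'"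
    proof
      assume "k' = k" then show ?thesis using g(2) by (simp add: comp_def)
    next
      assume k': "k' \<in> K"
      then have "k' \<noteq> k" using insert.hyps by auto
      then show ?thesis using LIMSEQ_subseq_LIMSEQ[OF s(2)[rule_format, OF k'] g(1)]
        by (simp add: comp_def)
    qed
  qed
  then show ?case using strict_mono_o[OF s(1) g(1)] by blast
qed

lemma ortho_bound:
  assumes o: "ortho N u m" and r: "r < m" and c: "u r \<in> cvec N"
  shows "cmod (u r l) \<le> 1"
proof (cases "l < N")
  case True
  have "(cmod (u r l))^2 \<le> (\<Sum>l<N. (cmod (u r l))^2)"
    by (rule member_le_sum) (use True in auto)
  also have "complex_of_real \<dots> = 1" using o r cinner_self[of N "u r"] unfolding ortho_def by simp
  then have "(\<Sum>l<N. (cmod (u r l))^2) = 1" using of_real_eq_1_iff by blast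
  finally have "(cmod (u r l))^2 \<le> 1" .
  then show ?thesis by (simp add: power_le_one_iff abs_square_le_1)
next
  case False
  then show ?thesis using c by (simp add: cvec_def)
qed

lemma cspan_csub: "(\<forall>r<m. u r \<in> cvec N) \<Longrightarrow> csubspace N (cspan u m)"
  using cspan_subspace[of u m] cspan_cvec[of m u N]
  unfolding csubspace_def V.subspace_def
  by (auto simp: zero_fun_def plus_fun_def sc_def)

lemma cspan_lincomb:
  assumes "\<forall>r<R. f r \<in> cspan u m"
  shows "(\<lambda>l. \<Sum>r<R. c r * f r l) \<in> cspan u m"
proof -
  have "(\<lambda>l. \<Sum>r<R. c r * f r l) = (\<Sum>r<R. sc (c r) (f r))" by (simp add: sc_sum)
  also have "\<dots> \<in> cspan u m"
    using assms by (intro V.subspace_sum[OF cspan_subspace] V.subspace_scale[OF cspan_subspace]) auto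
  finally show ?thesis .
qed

lemma matvec_lin:
  "matvec p q M (\<lambda>l. \<Sum>r<R. c r * f r l) = (\<lambda>l. \<Sum>r<R. c r * matvec p q M (f r) l)"
  unfolding matvec_def
  by (auto simp: fun_eq_iff sum_distrib_left mult.left_commute intro: sum.swap)


definition badg :: "('a \<Rightarrow> 'v) \<Rightarrow> ('a \<Rightarrow> 'v) \<Rightarrow> ('v \<Rightarrow> nat) \<Rightarrow> 'a qrep \<Rightarrow> 'a qrep \<Rightarrow> ('v \<Rightarrow> nat) \<Rightarrow> complex set" where
  "badg src tgt \<beta> a b \<gamma> = {t. \<exists>U. (\<forall>i. csubspace (\<beta> i) (U i)) \<and>
     (\<forall>h. \<forall>v\<in>U (src h). matvec (\<beta> (tgt h)) (\<beta> (src h)) (\<lambda>p q. a h p q + t * b h p q) v \<in> U (tgt h)) \<and>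
     (\<forall>i. cdim (U i) = \<gamma> i)}"

lemma badg_closed:
  fixes src tgt :: "'a \<Rightarrow> 'v::finite"
  assumes T: "\<forall>n. T n \<in> badg src tgt \<beta> a b \<gamma>" and lim: "T \<longlonglongrightarrow> t0"
  shows "t0 \<in> badg src tgt \<beta> a b \<gamma>"
proof -
  have "\<forall>n. \<exists>U. (\<forall>i. csubspace (\<beta> i) (U i)) \<and>
     (\<forall>h. \<forall>v\<in>U (src h). matvec (\<beta> (tgt h)) (\<beta> (src h)) (\<lambda>p q. a h p q + T n * b h p q) v \<in> U (tgt h)) \<and>
     (\<forall>i. cdim (U i) = \<gamma> i)" using T unfolding badg_def by blast
  then obtain Us where Us: "\<And>n. (\<forall>i. csubspace (\<beta> i) (Us n i)) \<and>
     (\<forall>h. \<forall>v\<in>Us n (src h). matvec (\<beta> (tgt h)) (\<beta> (src h)) (\<lambda>p q. a h p q + T n * b h p q) v \<in> Us n (tgt h)) \<and>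
     (\<forall>i. cdim (Us n i) = \<gamma> i)" by metis
  have "\<forall>n. \<forall>i. \<exists>u. ortho (\<beta> i) u (\<gamma> i) \<and> (\<forall>r<\<gamma> i. u r \<in> cvec (\<beta> i)) \<and> Us n i = cspan u (\<gamma> i)"
    using ONB Us by metis
  then have "\<forall>n. \<exists>g. \<forall>i. ortho (\<beta> i) (g i) (\<gamma> i) \<and> (\<forall>r<\<gamma> i. g i r \<in> cvec (\<beta> i)) \<and> Us n i = cspan (g i) (\<gamma> i)"
    by (auto intro!: choice)
  then obtain uu where uu: "\<And>n i. ortho (\<beta> i) (uu n i) (\<gamma> i) \<and> (\<forall>r<\<gamma> i. uu n i r \<in> cvec (\<beta> i)) \<and> Us n i = cspan (uu n i) (\<gamma> i)"
    by metis
  define K where "K = (SIGMA i:(UNIV::'v set). {..<\<gamma> i} \<times> {..<\<beta> i})"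
  have finK: "finite K" unfolding K_def by (intro finite_SigmaI) auto
  define f where "f = (\<lambda>n (k :: 'v \<times> nat \<times> nat). uu n (fst k) (fst (snd k)) (snd (snd k)))"
  have bnd: "cmod (f n k) \<le> 1" if "k \<in> K" for n k
    using that uu[where n=n and i="fst k"] ortho_bound unfolding K_def f_def by (auto simp: mem_Times_iff)
  obtain \<sigma> L where sL: "strict_mono \<sigma>" "\<forall>k\<in>K. (\<lambda>n. f (\<sigma> n) k) \<longlonglongrightarrow> L k"
    using SUB[of K f 1] finK bnd by blast
  define w where "w = (\<lambda>i r l. if r < \<gamma> i \<and> l < \<beta> i then L (i, r, l) else 0)"
  have conv: "(\<lambda>n. uu (\<sigma> n) i r l) \<longlonglongrightarrow> w i r l" if r: "r < \<gamma> i" for i r l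
  proof (cases "l < \<beta> i")
    case True
    then have "(i, r, l) \<in> K" using r unfolding K_def by auto
    then show ?thesis using sL(2) True r unfolding f_def w_def by auto
  next
    case False
    then have "\<And>n. uu (\<sigma> n) i r l = 0" using uu r unfolding cvec_def by auto
    then show ?thesis using False unfolding w_def by simp
  qed
  have wc: "\<forall>r<\<gamma> i. w i r \<in> cvec (\<beta> i)" for i unfolding w_def cvec_def by auto
  have wo: "ortho (\<beta> i) (w i) (\<gamma> i)" for i
    unfolding ortho_def
  proof (intro allI impI)
    fix r s assume r: "r < \<gamma> i" and s: "s < \<gamma> i"
    have "(\<lambda>n. cinner (\<beta> i) (uu (\<sigma> n) i r) (uu (\<sigma> n) i s)) \<longlonglongrightarrow> cinner (\<beta> i) (w i r) (w i s)"
      unfolding cinner_def by (intro tendsto_sum tendsto_mult tendsto_cnj conv r s)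
    moreover have "(\<lambda>n. cinner (\<beta> i) (uu (\<sigma> n) i r) (uu (\<sigma> n) i s)) = (\<lambda>n. if r = s then 1 else 0)"
      using uu r s unfolding ortho_def by auto
    ultimately show "cinner (\<beta> i) (w i r) (w i s) = (if r = s then 1 else 0)"
      using LIMSEQ_unique tendsto_const by metis
  qed
  have Ts: "(\<lambda>n. T (\<sigma> n)) \<longlonglongrightarrow> t0" using LIMSEQ_subseq_LIMSEQ[OF lim sL(1)] by (simp add: comp_def)
  have key: "matvec (\<beta> (tgt h)) (\<beta> (src h)) (\<lambda>p q. a h p q + t0 * b h p q) (w (src h) r) \<in> cspan (w (tgt h)) (\<gamma> (tgt h))"
    if r: "r < \<gamma> (src h)" for h r
  proof -
    define i where "i = src h"
    define j where "j = tgt h"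
    define vn where "vn = (\<lambda>n. matvec (\<beta> j) (\<beta> i) (\<lambda>p q. a h p q + T (\<sigma> n) * b h p q) (uu (\<sigma> n) i r))"
    define V0 where "V0 = matvec (\<beta> j) (\<beta> i) (\<lambda>p q. a h p q + t0 * b h p q) (w i r)"
    have ri: "r < \<gamma> i" using r i_def by simp
    have vin: "vn n \<in> cspan (uu (\<sigma> n) j) (\<gamma> j)" for n
    proof -
      have "uu (\<sigma> n) i r \<in> Us (\<sigma> n) i" using uu[where n="\<sigma> n" and i=i] in_cspan[OF ri] by auto
      then have "vn n \<in> Us (\<sigma> n) j" using Us[of "\<sigma> n"] unfolding vn_def i_def j_def by blast
      then show ?thesis using uu[where n="\<sigma> n" and i=j] by auto
    qed
    have exp: "vn n = (\<lambda>l. \<Sum>s<\<gamma> j. cinner (\<beta> j) (vn n) (uu (\<sigma> n) j s) * uu (\<sigma> n) j s l)" for n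
      using expand[OF _ vin] uu by blast
    have cv: "(\<lambda>n. vn n l) \<longlonglongrightarrow> V0 l" for l
      unfolding vn_def V0_def matvec_def
      by (cases "l < \<beta> j") (auto intro!: tendsto_sum tendsto_mult tendsto_add tendsto_const conv Ts ri)
    have cv2: "(\<lambda>n. vn n l) \<longlonglongrightarrow> (\<Sum>s<\<gamma> j. cinner (\<beta> j) V0 (w j s) * w j s l)" for l
    proof -
      have "(\<lambda>n. \<Sum>s<\<gamma> j. cinner (\<beta> j) (vn n) (uu (\<sigma> n) j s) * uu (\<sigma> n) j s l) \<longlonglongrightarrow>
            (\<Sum>s<\<gamma> j. cinner (\<beta> j) V0 (w j s) * w j s l)"
        unfolding cinner_def
        by (intro tendsto_sum tendsto_mult tendsto_cnj cv conv) auto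
      then show ?thesis using exp by (metis (no_types, lifting) ext)
    qed
    have "V0 = (\<lambda>l. \<Sum>s<\<gamma> j. cinner (\<beta> j) V0 (w j s) * w j s l)"
      using LIMSEQ_unique[OF cv cv2] by (auto simp: fun_eq_iff)
    then have "V0 \<in> cspan (w j) (\<gamma> j)" unfolding cspan_def
      by (rule range_eqI[of _ _ "\<lambda>s. cinner (\<beta> j) V0 (w j s)"])
    then show ?thesis unfolding V0_def i_def j_def .
  qed
  define U0 where "U0 = (\<lambda>i. cspan (w i) (\<gamma> i))"
  have "(\<forall>i. csubspace (\<beta> i) (U0 i))" unfolding U0_def using cspan_csub wc by blast
  moreover have "\<forall>h. \<forall>v\<in>U0 (src h). matvec (\<beta> (tgt h)) (\<beta> (src h)) (\<lambda>p q. a h p q + t0 * b h p q) v \<in> U0 (tgt h)"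
  proof (intro allI ballI)
    fix h v assume "v \<in> U0 (src h)"
    then obtain c where c: "v = (\<lambda>l. \<Sum>r<\<gamma> (src h). c r * w (src h) r l)" unfolding U0_def cspan_def by auto
    show "matvec (\<beta> (tgt h)) (\<beta> (src h)) (\<lambda>p q. a h p q + t0 * b h p q) v \<in> U0 (tgt h)"
      unfolding c matvec_lin U0_def by (rule cspan_lincomb) (use key in blast)
  qed
  moreover have "\<forall>i. cdim (U0 i) = \<gamma> i" unfolding U0_def using cdim_cspan wo wc by blast
  ultimately show ?thesis unfolding badg_def by blast
qed


lemma pigeon:
  fixes g :: "nat \<Rightarrow> 'b"
  assumes "finite A" "\<forall>n. g n \<in> A"
  shows "\<exists>a\<in>A. \<exists>\<sigma>::nat\<Rightarrow>nat. strict_mono \<sigma> \<and> (\<forall>n. g (\<sigma> n) = a)"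
proof -
  have "finite (g ` UNIV)" by (rule finite_subset[OF _ assms(1)]) (use assms(2) in blast)
  then obtain a where a: "a \<in> g ` UNIV" "infinite (g -` {a})"
    using inf_img_fin_dom[of g UNIV, OF _ infinite_UNIV_nat] by blast
  obtain \<sigma> :: "nat \<Rightarrow> nat" where s: "strict_mono \<sigma>" "\<forall>n. \<sigma> n \<in> g -` {a}" using infinite_enumerate[OF a(2)] by metis
  have "a \<in> A" using a(1) assms(2) by blast
  moreover have "\<forall>n. g (\<sigma> n) = a" using s(2) by blast
  ultimately show ?thesis using s(1) by blast
qed

lemma finite_bounded_funs: "finite {\<gamma> :: 'v::finite \<Rightarrow> nat. \<forall>i. \<gamma> i \<le> B i}"
proof -
  have "{\<gamma> :: 'v \<Rightarrow> nat. \<forall>i. \<gamma> i \<le> B i} = Pi\<^sub>E UNIV (\<lambda>i. {..B i})"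
    by (auto simp: PiE_UNIV_domain Pi_def)
  then show ?thesis by (simp add: finite_PiE)
qed

lemma cdim_zero_iff:
  assumes "csubspace N U"
  shows "cdim U = 0 \<longleftrightarrow> U = {\<lambda>_. 0}"
proof -
  obtain u where o: "ortho N u (cdim U)" and U: "U = cspan u (cdim U)" using ONB[OF assms] by blast
  show ?thesis
  proof
    assume "cdim U = 0" then show "U = {\<lambda>_. 0}" using U by (simp add: cspan_def)
  next
    assume z: "U = {\<lambda>_. 0}"
    show "cdim U = 0"
    proof (rule ccontr)
      assume "cdim U \<noteq> 0"
      then have "u 0 \<in> U" using U in_cspan[of 0 "cdim U" u] by simp
      then have "u 0 = (\<lambda>_. 0)" using z by simp
      moreover have "cinner N (u 0) (u 0) = 1" using o \<open>cdim U \<noteq> 0\<close> unfolding ortho_def by simp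
      ultimately show False by (simp add: cinner_def)
    qed
  qed
qed

lemma unstable_badg:
  fixes src tgt :: "'a \<Rightarrow> 'v::finite"
  assumes "(\<lambda>h p q. a h p q + t * b h p q) \<in> Rep src tgt \<beta>"
    and "\<not> semistable src tgt \<theta> \<beta> (\<lambda>h p q. a h p q + t * b h p q)"
  shows "\<exists>\<gamma>. (\<forall>i. \<gamma> i \<le> \<beta> i) \<and> (\<exists>i. \<gamma> i \<noteq> 0) \<and> slope \<theta> \<gamma> > slope \<theta> \<beta> \<and> t \<in> badg src tgt \<beta> a b \<gamma>"
proof -
  let ?z = "\<lambda>h p q. a h p q + t * b h p q"
  let ?P = "\<lambda>U :: 'v \<Rightarrow> (nat \<Rightarrow> complex) set. (\<forall>i. csubspace (\<beta> i) (U i)) \<and>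
        (\<forall>h. \<forall>v\<in>U (src h). matvec (\<beta> (tgt h)) (\<beta> (src h)) (?z h) v \<in> U (tgt h)) \<and>
        (\<exists>i. U i \<noteq> {\<lambda>_. 0})"
  have nX: "\<not> (\<forall>U. ?P U \<longrightarrow> slope \<theta> (\<lambda>i. cdim (U i)) \<le> slope \<theta> \<beta>)"
  proof
    assume X: "\<forall>U. ?P U \<longrightarrow> slope \<theta> (\<lambda>i. cdim (U i)) \<le> slope \<theta> \<beta>"
    have "semistable src tgt \<theta> \<beta> ?z" unfolding semistable_def
      by (rule conjI[OF assms(1) X])
    then show False using assms(2) by contradiction
  qed
  then obtain U where PU: "?P U" and sl: "\<not> slope \<theta> (\<lambda>i. cdim (U i)) \<le> slope \<theta> \<beta>"
    by blast
  have U1: "\<forall>i. csubspace (\<beta> i) (U i)" using PU by blast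
  have U2: "\<forall>h. \<forall>v\<in>U (src h). matvec (\<beta> (tgt h)) (\<beta> (src h)) (\<lambda>p q. a h p q + t * b h p q) v \<in> U (tgt h)"
    using PU by blast
  have U3: "\<exists>i. U i \<noteq> {\<lambda>_. 0}" using PU by blast
  have "\<forall>i. cdim (U i) \<le> \<beta> i"
  proof
    fix i
    have "U i \<subseteq> cvec (\<beta> i)" using U1 unfolding csubspace_def by blast
    then show "cdim (U i) \<le> \<beta> i" by (rule cdim_props(3))
  qed
  moreover have "\<exists>i. cdim (U i) \<noteq> 0" using U1 U3 cdim_zero_iff by blast
  moreover have "t \<in> badg src tgt \<beta> a b (\<lambda>i. cdim (U i))" unfolding badg_def using U1 U2 by blast
  moreover have "slope \<theta> (\<lambda>i. cdim (U i)) > slope \<theta> \<beta>" using sl by simp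
  ultimately show ?thesis by (intro exI[of _ "\<lambda>i. cdim (U i)"]) simp
qed

lemma badg_unstable:
  fixes src tgt :: "'a \<Rightarrow> 'v::finite"
  assumes "t \<in> badg src tgt \<beta> a b \<gamma>" "\<exists>i. \<gamma> i \<noteq> 0" "slope \<theta> \<gamma> > slope \<theta> \<beta>"
  shows "\<not> semistable src tgt \<theta> \<beta> (\<lambda>h p q. a h p q + t * b h p q)"
proof
  assume ss: "semistable src tgt \<theta> \<beta> (\<lambda>h p q. a h p q + t * b h p q)"
  obtain U where U1: "\<forall>i. csubspace (\<beta> i) (U i)"
    and U2: "\<forall>h. \<forall>v\<in>U (src h). matvec (\<beta> (tgt h)) (\<beta> (src h)) (\<lambda>p q. a h p q + t * b h p q) v \<in> U (tgt h)"
    and U3: "\<forall>i. cdim (U i) = \<gamma> i"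
    using assms(1) unfolding badg_def by blast
  have g: "(\<lambda>i. cdim (U i)) = \<gamma>" using U3 by auto
  obtain i where "\<gamma> i \<noteq> 0" using assms(2) by blast
  then have "U i \<noteq> {\<lambda>_. 0}" using U1 U3 cdim_zero_iff by metis
  then have U4: "\<exists>i. U i \<noteq> {\<lambda>_. 0}" by blast
  have "slope \<theta> (\<lambda>i. cdim (U i)) \<le> slope \<theta> \<beta>"
    using ss[unfolded semistable_def] U1 U2 U4 by blast
  then show False using assms(3) g by simp
qed


lemma matvec_comb:
  "matvec m n (\<lambda>p q. M1 p q + t * (M2 p q - M1 p q)) v
   = (\<lambda>l. matvec m n M1 v l + t * (matvec m n M2 v l - matvec m n M1 v l))"
  unfolding matvec_def by (auto simp: fun_eq_iff algebra_simps sum.distrib sum_subtractf sum_distrib_left)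

lemma flagsp_comb:
  assumes "f1 \<in> flagsp \<alpha> d g k i" "f2 \<in> flagsp \<alpha> d g k i"
  shows "(\<lambda>l. f1 l + t * (f2 l - f1 l)) \<in> flagsp \<alpha> d g k i"
proof -
  obtain c1 where c1: "f1 = (\<lambda>p. if p < \<alpha> i then (\<Sum>l<psum d k i. c1 l * g i p l) else 0)"
    using assms(1) unfolding flagsp_def by blast
  obtain c2 where c2: "f2 = (\<lambda>p. if p < \<alpha> i then (\<Sum>l<psum d k i. c2 l * g i p l) else 0)"
    using assms(2) unfolding flagsp_def by blast
  have "(\<lambda>l. f1 l + t * (f2 l - f1 l)) =
    (\<lambda>p. if p < \<alpha> i then (\<Sum>l<psum d k i. (c1 l + t * (c2 l - c1 l)) * g i p l) else 0)"
    unfolding c1 c2 by (auto simp: fun_eq_iff algebra_simps sum.distrib sum_subtractf sum_distrib_left)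
  then show ?thesis unfolding flagsp_def mem_Collect_eq by (rule exI[of _ "\<lambda>l. c1 l + t * (c2 l - c1 l)"])
qed

lemma RepF_comb:
  assumes "x0 \<in> RepF src tgt \<alpha> s d g" "y \<in> RepF src tgt \<alpha> s d g"
  shows "(\<lambda>h p q. x0 h p q + t * (y h p q - x0 h p q)) \<in> RepF src tgt \<alpha> s d g"
proof -
  have r: "x0 \<in> Rep src tgt \<alpha>" "y \<in> Rep src tgt \<alpha>" using assms unfolding RepF_def by auto
  have "(\<lambda>h p q. x0 h p q + t * (y h p q - x0 h p q)) \<in> Rep src tgt \<alpha>"
    using r unfolding Rep_def by auto
  moreover have "\<forall>k\<in>{1..s}. \<forall>h. \<forall>v\<in>flagsp \<alpha> d g k (src h).
       matvec (\<alpha> (tgt h)) (\<alpha> (src h)) ((\<lambda>h p q. x0 h p q + t * (y h p q - x0 h p q)) h) v \<in> flagsp \<alpha> d g k (tgt h)"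
  proof (intro ballI allI)
    fix k h v assume k: "k \<in> {1..s}" and v: "v \<in> flagsp \<alpha> d g k (src h)"
    have "matvec (\<alpha> (tgt h)) (\<alpha> (src h)) (x0 h) v \<in> flagsp \<alpha> d g k (tgt h)"
      using assms(1) k v unfolding RepF_def by blast
    moreover have "matvec (\<alpha> (tgt h)) (\<alpha> (src h)) (y h) v \<in> flagsp \<alpha> d g k (tgt h)"
      using assms(2) k v unfolding RepF_def by blast
    ultimately show "matvec (\<alpha> (tgt h)) (\<alpha> (src h)) ((\<lambda>h p q. x0 h p q + t * (y h p q - x0 h p q)) h) v \<in> flagsp \<alpha> d g k (tgt h)"
      using matvec_comb[of "\<alpha> (tgt h)" "\<alpha> (src h)" "x0 h" t "y h" v] flagsp_comb by simp
  qed
  ultimately show ?thesis unfolding RepF_def by blast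
qed

lemma phi_comb:
  "phi src tgt \<alpha> d g ginv k (\<lambda>h p q. x0 h p q + t * (y h p q - x0 h p q))
   = (\<lambda>h p q. phi src tgt \<alpha> d g ginv k x0 h p q + t * (phi src tgt \<alpha> d g ginv k y h p q - phi src tgt \<alpha> d g ginv k x0 h p q))"
  unfolding phi_def by (auto simp: fun_eq_iff algebra_simps sum.distrib sum_subtractf sum_distrib_left)

lemma phi_Rep: "phi src tgt \<alpha> d g ginv k x \<in> Rep src tgt (d k)"
  unfolding phi_def Rep_def by auto

lemma poly_line:
  assumes "polyfun P"
  shows "\<exists>q. \<forall>t. P (\<lambda>h i j. a h i j + t * b h i j) = poly q t"
  using assms
proof (induction rule: polyfun.induct)
  case (pconst c)
  show ?case by (rule exI[of _ "[:c:]"]) simp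
next
  case (pcoord h i j)
  show ?case by (rule exI[of _ "[:a h i j, b h i j:]"]) (simp add: mult.commute)
next
  case (padd f g)
  then obtain q1 q2 where "\<forall>t. f (\<lambda>h i j. a h i j + t * b h i j) = poly q1 t"
    "\<forall>t. g (\<lambda>h i j. a h i j + t * b h i j) = poly q2 t" by blast
  then show ?case by (intro exI[of _ "q1 + q2"]) simp
next
  case (pmult f g)
  then obtain q1 q2 where "\<forall>t. f (\<lambda>h i j. a h i j + t * b h i j) = poly q1 t"
    "\<forall>t. g (\<lambda>h i j. a h i j + t * b h i j) = poly q2 t" by blast
  then show ?case by (intro exI[of _ "q1 * q2"]) simp
qed


lemma Ginf:
  fixes src tgt :: "'a \<Rightarrow> 'v::finite"
  assumes x0: "x0 \<in> RepFss src tgt \<theta> \<alpha> s d g ginv" and y: "y \<in> RepF src tgt \<alpha> s d g"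
  shows "infinite {t. (\<lambda>h i j. x0 h i j + t * (y h i j - x0 h i j)) \<in> RepFss src tgt \<theta> \<alpha> s d g ginv}"
proof
  define xt where "xt = (\<lambda>t::complex. (\<lambda>h i j. x0 h i j + t * (y h i j - x0 h i j)))"
  define G where "G = {t. xt t \<in> RepFss src tgt \<theta> \<alpha> s d g ginv}"
  assume "finite {t. (\<lambda>h i j. x0 h i j + t * (y h i j - x0 h i j)) \<in> RepFss src tgt \<theta> \<alpha> s d g ginv}"
  then have fin: "finite G" unfolding G_def xt_def .
  define hh where "hh = (\<lambda>n::nat. complex_of_real (inverse (real (Suc n))))"
  have injh: "inj hh" unfolding hh_def by (rule injI) simp
  have "finite (hh -` G)" by (rule finite_vimageI[OF fin injh])
  then have "infinite (UNIV - hh -` G)" using infinite_UNIV_nat by (metis Diff_infinite_finite)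
  then obtain \<sigma> :: "nat \<Rightarrow> nat" where \<sigma>: "strict_mono \<sigma>" "\<forall>n. \<sigma> n \<in> UNIV - hh -` G"
    using infinite_enumerate by metis
  define T where "T = (\<lambda>n. hh (\<sigma> n))"
  have hlim: "hh \<longlonglongrightarrow> 0"
    unfolding hh_def using tendsto_of_real[OF LIMSEQ_inverse_real_of_nat, where 'a=complex] by simp
  have Tlim: "T \<longlonglongrightarrow> 0" using LIMSEQ_subseq_LIMSEQ[OF hlim \<sigma>(1)] unfolding T_def by (simp add: comp_def)
  have x0F: "x0 \<in> RepF src tgt \<alpha> s d g" using x0 unfolding RepFss_def by blast
  define A where "A = (\<lambda>k. phi src tgt \<alpha> d g ginv k x0)"
  define B where "B = (\<lambda>k h p q. phi src tgt \<alpha> d g ginv k y h p q - phi src tgt \<alpha> d g ginv k x0 h p q)"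
  have phix: "phi src tgt \<alpha> d g ginv k (xt t) = (\<lambda>h p q. A k h p q + t * B k h p q)" for k t
    unfolding xt_def A_def B_def by (rule phi_comb)
  define Af where "Af = Sigma {1..s} (\<lambda>k. {\<gamma> :: 'v \<Rightarrow> nat. \<forall>i. \<gamma> i \<le> d k i})"
  have finAf: "finite Af" unfolding Af_def by (intro finite_SigmaI finite_bounded_funs) simp
  define Q where "Q = (\<lambda>n (kg :: nat \<times> ('v \<Rightarrow> nat)). (\<exists>i. snd kg i \<noteq> 0) \<and>
      slope \<theta> (snd kg) > slope \<theta> (d (fst kg)) \<and> T n \<in> badg src tgt (d (fst kg)) (A (fst kg)) (B (fst kg)) (snd kg))"
  have ex: "\<exists>kg. kg \<in> Af \<and> Q n kg" for n
  proof -
    have "T n \<notin> G" using \<sigma>(2) unfolding T_def by auto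
    then have nss: "xt (T n) \<notin> RepFss src tgt \<theta> \<alpha> s d g ginv" unfolding G_def by simp
    have "xt (T n) \<in> RepF src tgt \<alpha> s d g" unfolding xt_def by (rule RepF_comb[OF x0F y])
    then obtain k where k: "k \<in> {1..s}" and ns: "\<not> semistable src tgt \<theta> (d k) (phi src tgt \<alpha> d g ginv k (xt (T n)))"
      using nss unfolding RepFss_def by blast
    have ns2: "\<not> semistable src tgt \<theta> (d k) (\<lambda>h p q. A k h p q + T n * B k h p q)"
      using ns unfolding phix .
    have rep: "(\<lambda>h p q. A k h p q + T n * B k h p q) \<in> Rep src tgt (d k)"
      using phi_Rep[of src tgt \<alpha> d g ginv k "xt (T n)"] unfolding phix .
    obtain \<gamma> where "(\<forall>i. \<gamma> i \<le> d k i)" "(\<exists>i. \<gamma> i \<noteq> 0)" "slope \<theta> \<gamma> > slope \<theta> (d k)"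
      "T n \<in> badg src tgt (d k) (A k) (B k) \<gamma>"
      using unstable_badg[OF rep ns2] by blast
    then have "(k, \<gamma>) \<in> Af \<and> Q n (k, \<gamma>)" unfolding Af_def Q_def using k by simp
    then show ?thesis by blast
  qed
  then obtain gg where gg: "\<And>n. gg n \<in> Af \<and> Q n (gg n)" by metis
  obtain kg \<rho> where kg: "kg \<in> Af" and \<rho>: "strict_mono (\<rho> :: nat \<Rightarrow> nat)" "\<forall>n. gg (\<rho> n) = kg"
    using pigeon[OF finAf, of gg] gg by blast
  obtain k \<gamma> where kgd: "kg = (k, \<gamma>)" by (cases kg)
  have k: "k \<in> {1..s}" using kg kgd unfolding Af_def by auto
  have Qk: "Q (\<rho> n) (k, \<gamma>)" for n using gg[of "\<rho> n"] \<rho>(2) kgd by metis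
  have inb: "\<forall>n. (T \<circ> \<rho>) n \<in> badg src tgt (d k) (A k) (B k) \<gamma>" using Qk unfolding Q_def by simp
  have "(T \<circ> \<rho>) \<longlonglongrightarrow> 0" by (rule LIMSEQ_subseq_LIMSEQ[OF Tlim \<rho>(1)])
  then have "0 \<in> badg src tgt (d k) (A k) (B k) \<gamma>" using badg_closed[OF inb] by blast
  moreover have "\<exists>i. \<gamma> i \<noteq> 0" "slope \<theta> \<gamma> > slope \<theta> (d k)" using Qk[of 0] unfolding Q_def by simp_all
  ultimately have "\<not> semistable src tgt \<theta> (d k) (\<lambda>h p q. A k h p q + 0 * B k h p q)"
    using badg_unstable by blast
  moreover have "semistable src tgt \<theta> (d k) (A k)" using x0 k unfolding RepFss_def A_def by blast
  ultimately show False by simp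
qed

theorem lemma4p5:
  fixes src tgt :: "'a::finite \<Rightarrow> 'v::finite"
    and \<theta> :: "'v \<Rightarrow> int" and \<alpha> :: "'v \<Rightarrow> nat"
    and s :: nat and d :: "nat \<Rightarrow> 'v \<Rightarrow> nat"
    and g ginv :: "'v \<Rightarrow> nat \<Rightarrow> nat \<Rightarrow> complex"
  assumes "\<forall>k\<in>{1..s}. \<exists>i. d k i \<noteq> 0"
    and "\<forall>i. (\<Sum>k\<in>{1..s}. d k i) = \<alpha> i"
    and "is_adapted_basis \<alpha> g ginv"
    and "RepFss src tgt \<theta> \<alpha> s d g ginv \<noteq> {}"
  shows "zdim (RepFss src tgt \<theta> \<alpha> s d g ginv) = zdim (RepF src tgt \<alpha> s d g)"
proof -
  define RS where "RS = RepFss src tgt \<theta> \<alpha> s d g ginv"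
  define RF where "RF = RepF src tgt \<alpha> s d g"
  obtain x0 where x0: "x0 \<in> RS" using assms(4) unfolding RS_def by blast
  have sub: "RS \<subseteq> RF" unfolding RS_def RF_def RepFss_def by blast
  have key: "RF \<subseteq> Z" if Z: "zclosed Z" "RS \<subseteq> Z" for Z
  proof
    fix y assume y: "y \<in> RF"
    obtain P where P: "\<forall>p\<in>P. polyfun p" "Z = {x. \<forall>p\<in>P. p x = 0}" using Z(1) unfolding zclosed_def by blast
    have "\<forall>p\<in>P. p y = 0"
    proof
      fix p assume p: "p \<in> P"
      obtain q where q: "\<forall>t. p (\<lambda>h i j. x0 h i j + t * (y h i j - x0 h i j)) = poly q t"
        using poly_line[of p x0 "\<lambda>h i j. y h i j - x0 h i j"] P(1) p by blast
      let ?G = "{t. (\<lambda>h i j. x0 h i j + t * (y h i j - x0 h i j)) \<in> RS}"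
      have inf: "infinite ?G" using Ginf[of x0 src tgt \<theta> \<alpha> s d g ginv y] x0 y unfolding RS_def RF_def by blast
      have "?G \<subseteq> {t. poly q t = 0}"
      proof
        fix t assume "t \<in> ?G"
        then have "(\<lambda>h i j. x0 h i j + t * (y h i j - x0 h i j)) \<in> Z" using Z(2) by blast
        then have "p (\<lambda>h i j. x0 h i j + t * (y h i j - x0 h i j)) = 0" using P(2) p by blast
        then show "t \<in> {t. poly q t = 0}" using q by simp
      qed
      then have "infinite {t. poly q t = 0}" using inf finite_subset by blast
      then have "q = 0" using poly_roots_finite by blast
      moreover have e: "(\<lambda>h i j. x0 h i j + 1 * (y h i j - x0 h i j)) = y" by simp
      have "p y = poly q 1" using q[rule_format, of 1] unfolding e .
      ultimately show "p y = 0" by simp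
    qed
    then show "y \<in> Z" using P(2) by blast
  qed
  have "{Z. zclosed Z \<and> RS \<subseteq> Z} = {Z. zclosed Z \<and> RF \<subseteq> Z}" using key sub by blast
  then have "zclosure RS = zclosure RF" unfolding zclosure_def by simp
  then show ?thesis unfolding zdim_def RS_def RF_def by simp
qed

end
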